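(* Let $V(x)$ be a real function and $\epsilon$ a specific real constant. Let $\phi_w(x)$ be a solution of $$-\phi_w''+(V(x)-\epsilon)\phi_w=0,$$ and let $\gamma(x)$ be a never vanishing differentiable function defined on the domain of $V(x)$. Suppose $\phi_v(x)\neq\phi_w(x)$ is a solution of $$-\phi_v''+\Big(V(x)+\frac{1}{\gamma^2(x)}-\epsilon\Big)\phi_v=0,$$ defined on the same domain as $\phi_w(x)$. Then the function defined, up to a nonvanishing multiplicative constant, by $$\phi_{\overline w}=\gamma\left(-\frac{d}{dx}+\frac{\phi_v'}{\phi_v}\right)\phi_w$$ satisfies $$-\phi_{\overline w}''+\left\{V(x)-2\Big(\frac{\gamma'}{\gamma}\,v+v'\Big)+\frac{\gamma''}{\gamma}-\epsilon\right\}\phi_{\overline w}=0,$$ where $v(x)$ is the function defined locally by $v=\phi_v'/\phi_v$.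
   Context: Primes denote derivatives with respect to $x$. The statements are local: they hold on intervals where $\phi_v$ does not vanish, so that $v=\phi_v'/\phi_v$ is defined. *)

theory Defs
  imports "HOL-Analysis.Analysis"
begin

end

theory Submission
  imports Defs
begin

theorem theorem3:
  fixes V \<gamma> \<phi>w \<phi>v :: "real \<Rightarrow> real" and \<epsilon> c :: real and S :: "real set"
  assumes S: "open S"
    and w_diff: "\<forall>x\<in>S. \<phi>w differentiable (at x) \<and> deriv \<phi>w differentiable (at x)"
    and w_eq: "\<forall>x\<in>S. - deriv (deriv \<phi>w) x + (V x - \<epsilon>) * \<phi>w x = 0"
    and g_diff: "\<forall>x\<in>S. \<gamma> differentiable (at x) \<and> deriv \<gamma> differentiable (at x)"
    and g_nz: "\<forall>x\<in>S. \<gamma> x \<noteq> 0"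
    and v_diff: "\<forall>x\<in>S. \<phi>v differentiable (at x) \<and> deriv \<phi>v differentiable (at x)"
    and v_eq: "\<forall>x\<in>S. - deriv (deriv \<phi>v) x + (V x + 1 / (\<gamma> x)\<^sup>2 - \<epsilon>) * \<phi>v x = 0"
    and v_nz: "\<forall>x\<in>S. \<phi>v x \<noteq> 0"
    and v_ne_w: "\<exists>x\<in>S. \<phi>v x \<noteq> \<phi>w x"
    and c: "c \<noteq> 0"
  shows "let v = (\<lambda>x. deriv \<phi>v x / \<phi>v x);
             \<phi>wb = (\<lambda>x. c * (\<gamma> x * (- deriv \<phi>w x + v x * \<phi>w x)))
         in \<forall>x\<in>S. \<phi>wb differentiable (at x) \<and> deriv \<phi>wb differentiable (at x) \<and>
              - deriv (deriv \<phi>wb) x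
              + (V x - 2 * (deriv \<gamma> x / \<gamma> x * v x + deriv v x)
                 + deriv (deriv \<gamma>) x / \<gamma> x - \<epsilon>) * \<phi>wb x = 0"
proof -
  define w1 where "w1 = deriv \<phi>w"
  define w2 where "w2 = deriv w1"
  define p1 where "p1 = deriv \<phi>v"
  define p2 where "p2 = deriv p1"
  define g1 where "g1 = deriv \<gamma>"
  define g2 where "g2 = deriv g1"
  define v where "v = (\<lambda>x. deriv \<phi>v x / \<phi>v x)"
  define u where "u = (\<lambda>x. v x * \<phi>w x - w1 x)"
  define dv where "dv = (\<lambda>x. (p2 x * \<phi>v x - p1 x * p1 x) / (\<phi>v x)\<^sup>2)"
  define u1 where "u1 = (\<lambda>x. dv x * \<phi>w x + v x * w1 x - w2 x)"
  define W where "W = (\<lambda>x. c * (\<gamma> x * (- deriv \<phi>w x + v x * \<phi>w x)))"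
  define D where "D = (\<lambda>x. c * (g1 x * u x + \<phi>w x / \<gamma> x - \<gamma> x * v x * u x))"
  have dw: "\<And>y. y \<in> S \<Longrightarrow> (\<phi>w has_real_derivative w1 y) (at y)"
    using w_diff unfolding w1_def by (simp add: DERIV_deriv_iff_real_differentiable)
  have dw1: "\<And>y. y \<in> S \<Longrightarrow> (w1 has_real_derivative w2 y) (at y)"
    using w_diff unfolding w2_def w1_def by (simp add: DERIV_deriv_iff_real_differentiable)
  have dp: "\<And>y. y \<in> S \<Longrightarrow> (\<phi>v has_real_derivative p1 y) (at y)"
    using v_diff unfolding p1_def by (simp add: DERIV_deriv_iff_real_differentiable)
  have dp1: "\<And>y. y \<in> S \<Longrightarrow> (p1 has_real_derivative p2 y) (at y)"
    using v_diff unfolding p2_def p1_def by (simp add: DERIV_deriv_iff_real_differentiable)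
  have dg: "\<And>y. y \<in> S \<Longrightarrow> (\<gamma> has_real_derivative g1 y) (at y)"
    using g_diff unfolding g1_def by (simp add: DERIV_deriv_iff_real_differentiable)
  have dg1: "\<And>y. y \<in> S \<Longrightarrow> (g1 has_real_derivative g2 y) (at y)"
    using g_diff unfolding g2_def g1_def by (simp add: DERIV_deriv_iff_real_differentiable)
  have w2eq: "\<And>y. y \<in> S \<Longrightarrow> w2 y = (V y - \<epsilon>) * \<phi>w y"
    using w_eq unfolding w2_def w1_def by force
  have p2eq: "\<And>y. y \<in> S \<Longrightarrow> p2 y = (V y + 1 / (\<gamma> y)\<^sup>2 - \<epsilon>) * \<phi>v y"
    using v_eq unfolding p2_def p1_def by force
  have vv: "v = (\<lambda>x. p1 x / \<phi>v x)" unfolding v_def p1_def by simp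
  have dvv: "\<And>y. y \<in> S \<Longrightarrow> (v has_real_derivative dv y) (at y)"
  proof -
    fix y assume y: "y \<in> S"
    show "(v has_real_derivative dv y) (at y)"
      unfolding vv dv_def
      using v_nz y by (auto intro!: derivative_eq_intros dp1[OF y] dp[OF y] simp: power2_eq_square field_simps)
  qed
  have du: "\<And>y. y \<in> S \<Longrightarrow> (u has_real_derivative u1 y) (at y)"
  proof -
    fix y assume y: "y \<in> S"
    show "(u has_real_derivative u1 y) (at y)"
      unfolding u_def u1_def
      by (auto intro!: derivative_eq_intros dvv[OF y] dw[OF y] dw1[OF y])
  qed
  have Wu: "W = (\<lambda>x. c * (\<gamma> x * u x))"
    unfolding W_def u_def w1_def by (auto simp: algebra_simps)
  have dvx: "\<And>y. y \<in> S \<Longrightarrow> dv y = V y + 1 / (\<gamma> y)\<^sup>2 - \<epsilon> - v y ^ 2"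
  proof -
    fix y assume y: "y \<in> S"
    show "dv y = V y + 1 / (\<gamma> y)\<^sup>2 - \<epsilon> - v y ^ 2"
      unfolding dv_def vv p2eq[OF y] using v_nz y
      by (simp add: field_simps power2_eq_square)
  qed
  have u1x: "\<And>y. y \<in> S \<Longrightarrow> u1 y = \<phi>w y / (\<gamma> y)\<^sup>2 - v y * u y"
  proof -
    fix y assume y: "y \<in> S"
    show "u1 y = \<phi>w y / (\<gamma> y)\<^sup>2 - v y * u y"
      unfolding u1_def dvx[OF y] w2eq[OF y] u_def
      by (simp add: field_simps power2_eq_square)
  qed
  have dW: "\<And>y. y \<in> S \<Longrightarrow> (W has_real_derivative D y) (at y)"
  proof -
    fix y assume y: "y \<in> S"
    have "(W has_real_derivative c * (g1 y * u y + \<gamma> y * u1 y)) (at y)"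
      unfolding Wu
      by (auto intro!: derivative_eq_intros dg[OF y] du[OF y])
    moreover have "c * (g1 y * u y + \<gamma> y * u1 y) = D y"
      unfolding D_def u1x[OF y] using g_nz y
      by (simp add: field_simps power2_eq_square)
    ultimately show "(W has_real_derivative D y) (at y)" by simp
  qed
  have dD: "\<And>x. x \<in> S \<Longrightarrow> (D has_real_derivative
     c * (g2 x * u x + g1 x * u1 x + (w1 x * \<gamma> x - \<phi>w x * g1 x) / (\<gamma> x)\<^sup>2
       - (g1 x * v x * u x + \<gamma> x * dv x * u x + \<gamma> x * v x * u1 x))) (at x)"
  proof -
    fix x assume x: "x \<in> S"
    show "(D has_real_derivative
     c * (g2 x * u x + g1 x * u1 x + (w1 x * \<gamma> x - \<phi>w x * g1 x) / (\<gamma> x)\<^sup>2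
       - (g1 x * v x * u x + \<gamma> x * dv x * u x + \<gamma> x * v x * u1 x))) (at x)"
      unfolding D_def
      using g_nz x by (auto intro!: derivative_eq_intros dg[OF x] dg1[OF x] du[OF x] dw[OF x] dvv[OF x] simp: power2_eq_square field_simps)
  qed
  have main: "\<forall>x\<in>S. W differentiable (at x) \<and> deriv W differentiable (at x) \<and>
              - deriv (deriv W) x
              + (V x - 2 * (deriv \<gamma> x / \<gamma> x * v x + deriv v x)
                 + deriv (deriv \<gamma>) x / \<gamma> x - \<epsilon>) * W x = 0"
  proof (intro ballI conjI)
    fix x assume x: "x \<in> S"
    show "W differentiable at x" using dW[OF x] real_differentiable_def by blast
    have dWeq: "deriv W y = D y" if "y \<in> S" for y using dW[OF that] DERIV_imp_deriv by blast
    have ddW: "(deriv W has_real_derivative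
     c * (g2 x * u x + g1 x * u1 x + (w1 x * \<gamma> x - \<phi>w x * g1 x) / (\<gamma> x)\<^sup>2
       - (g1 x * v x * u x + \<gamma> x * dv x * u x + \<gamma> x * v x * u1 x))) (at x)"
      by (rule has_field_derivative_transform_within_open[OF dD[OF x] S x]) (simp add: dWeq)
    then show "deriv W differentiable at x" using real_differentiable_def by blast
    have e1: "deriv (deriv W) x = c * (g2 x * u x + g1 x * u1 x + (w1 x * \<gamma> x - \<phi>w x * g1 x) / (\<gamma> x)\<^sup>2
       - (g1 x * v x * u x + \<gamma> x * dv x * u x + \<gamma> x * v x * u1 x))"
      using ddW DERIV_imp_deriv by blast
    have e2: "deriv v x = dv x" using dvv[OF x] DERIV_imp_deriv by blast
    have e3: "W x = c * (\<gamma> x * u x)" unfolding Wu ..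
    have gx: "\<gamma> x \<noteq> 0" using g_nz x by blast
    show "- deriv (deriv W) x + (V x - 2 * (deriv \<gamma> x / \<gamma> x * v x + deriv v x)
                 + deriv (deriv \<gamma>) x / \<gamma> x - \<epsilon>) * W x = 0"
      apply (simp only: e1 e2 e3 g1_def[symmetric] g2_def[symmetric] u1x[OF x] dvx[OF x])
      using gx by (simp add: u_def field_simps power2_eq_square)
  qed
show ?thesis using main unfolding Let_def W_def v_def .
qed

end
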